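(* Let $m,n\in\mathbb{N}$, $0<\ell\le\infty$, and let $Q_1(x)$, $Q_0(x)$ be $m\times m$ matrix functions, locally summable on $[0,\ell)$. Consider the system $$y'(x,\lambda)=-\big(\lambda Q_1(x)+Q_0(x)\big)y(x,\lambda)\qquad(y'=\tfrac{d}{dx}y).$$ Let $A_1,A_2,S(0)$ be $n\times n$ matrices and $\Pi_1(0),\Pi_2(0)$ be $n\times m$ matrices satisfying $$A_1S(0)-S(0)A_2=\Pi_1(0)\Pi_2(0)^*.$$ Define $\Pi_1(x),\Pi_2(x),S(x)$ on $[0,\ell)$ by these initial values and $$\Pi_1'=A_1\Pi_1Q_1+\Pi_1Q_0,\qquad (\Pi_2^* )'=-Q_1\Pi_2^*A_2-Q_0\Pi_2^*,\qquad S'=\Pi_1Q_1\Pi_2^*,$$ and for $\lambda$ not an eigenvalue of $A_1$ set $$w_A(x,\lambda)=I_m-\Pi_2(x)^*S(x)^{-1}(A_1-\lambda I_n)^{-1}\Pi_1(x).$$ Let $y(x,\lambda)$ satisfy the system above. Then, at the points $x$ where $S(x)$ is invertible (i.e., on any subinterval of $[0,\ell)$ on which $S(x)$ is invertible), the function $\widetilde y(x,\lambda):=w_A(x,\lambda)y(x,\lambda)$ satisfies $$\widetilde y'(x,\lambda)=-\big(\lambda Q_1(x)+\widetilde Q_0(x)\big)\widetilde y(x,\lambda),$$ where $\widetilde Q_0(x)=Q_0(x)-\big(Q_1(x)X(x)-X(x)Q_1(x)\big)$ and $X(x)=\Pi_2(x)^*S(x)^{-1}\Pi_1(x)$.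
   Context: $I_n$ is the $n\times n$ identity matrix and $H^*$ denotes the conjugate transpose of a matrix $H$. Differential equations with locally summable coefficients are understood for absolutely continuous solutions, almost everywhere. *)

theory Defs
  imports "HOL-Analysis.Analysis"
begin

definition ctrans :: "complex^'c^'r \<Rightarrow> complex^'r^'c" where
  "ctrans A = (\<chi> i j. cnj (A $ j $ i))"

definition abs_cont_on :: "(real \<Rightarrow> 'a::real_normed_vector) \<Rightarrow> real \<Rightarrow> real \<Rightarrow> bool" where
  "abs_cont_on f a b \<longleftrightarrow>
     (\<forall>e>0. \<exists>d>0. \<forall>(N::nat) (u::nat \<Rightarrow> real) v.
        (\<forall>k<N. a \<le> u k \<and> u k \<le> v k \<and> v k \<le> b) \<and>
        (\<forall>i<N. \<forall>j<N. i \<noteq> j \<longrightarrow> v i \<le> u j \<or> v j \<le> u i) \<and>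
        (\<Sum>k<N. v k - u k) < d
        \<longrightarrow> (\<Sum>k<N. norm (f (v k) - f (u k))) < e)"

definition loc_summable :: "real set \<Rightarrow> (real \<Rightarrow> 'a::euclidean_space) \<Rightarrow> bool" where
  "loc_summable I f \<longleftrightarrow> (\<forall>a b. {a..b} \<subseteq> I \<longrightarrow> f absolutely_integrable_on {a..b})"

definition ac_solution :: "real set \<Rightarrow> (real \<Rightarrow> 'a \<Rightarrow> 'a) \<Rightarrow> (real \<Rightarrow> 'a::real_normed_vector) \<Rightarrow> bool" where
  "ac_solution I F y \<longleftrightarrow>
     (\<forall>a b. {a..b} \<subseteq> I \<longrightarrow> abs_cont_on y a b) \<and>
     (AE x in lebesgue. x \<in> I \<longrightarrow> (y has_vector_derivative F x (y x)) (at x))"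

definition half_line :: "ereal \<Rightarrow> real set" where
  "half_line l = {x. 0 \<le> x \<and> ereal x < l}"

end

theory Submission
  imports Defs
begin


lemma norm_le_l1_vec: "norm (x::'a::real_normed_vector^'n) \<le> (\<Sum>i\<in>UNIV. norm (x$i))"
  unfolding norm_vec_def by (rule L2_set_le_sum) simp

lemma nth_le_vec: "norm ((x::'a::real_normed_vector^'n) $ i) \<le> norm x"
  unfolding norm_vec_def by (rule member_le_L2_set) simp_all

lemma matrix_add_rdistrib': "((A + B) ** C) = (A ** C) + (B ** C)"
  by (simp add: matrix_matrix_mult_def vec_eq_iff sum.distrib distrib_right)

lemma norm_mat_le:
  fixes x :: "complex^'n^'m"
  assumes "\<And>i j. norm (x$i$j) \<le> c"
  shows "norm x \<le> real CARD('m) * real CARD('n) * c"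
proof -
  have "norm x \<le> (\<Sum>i\<in>UNIV. norm (x$i))" by (rule norm_le_l1_vec)
  also have "\<dots> \<le> (\<Sum>i\<in>(UNIV::'m set). real CARD('n) * c)"
  proof (rule sum_mono)
    fix i
    have "norm (x$i) \<le> (\<Sum>j\<in>UNIV. norm (x$i$j))" by (rule norm_le_l1_vec)
    also have "\<dots> \<le> (\<Sum>j\<in>(UNIV::'n set). c)" by (rule sum_mono) (rule assms)
    finally show "norm (x$i) \<le> real CARD('n) * c" by simp
  qed
  finally show ?thesis by simp
qed

lemma norm_vec_le:
  fixes x :: "complex^'m"
  assumes "\<And>i. norm (x$i) \<le> c"
  shows "norm x \<le> real CARD('m) * c"
proof -
  have "norm x \<le> (\<Sum>i\<in>UNIV. norm (x$i))" by (rule norm_le_l1_vec)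
  also have "\<dots> \<le> (\<Sum>i\<in>(UNIV::'m set). c)" by (rule sum_mono) (rule assms)
  finally show ?thesis by simp
qed

lemma bb_mm: "bounded_bilinear ((**) :: complex^'k^'m \<Rightarrow> complex^'n^'k \<Rightarrow> complex^'n^'m)"
proof
  fix a a' :: "complex^'k^'m" and b b' :: "complex^'n^'k" and r :: real
  show "(a + a') ** b = a ** b + a' ** b" by (simp add: matrix_add_rdistrib')
  show "a ** (b + b') = a ** b + a ** b'" by (simp add: matrix_add_ldistrib)
  show "(r *\<^sub>R a) ** b = r *\<^sub>R (a ** b)"
    by (simp add: matrix_matrix_mult_def vec_eq_iff scaleR_sum_right)
  show "a ** (r *\<^sub>R b) = r *\<^sub>R (a ** b)"
    by (simp add: matrix_matrix_mult_def vec_eq_iff scaleR_sum_right)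
next
  show "\<exists>K. \<forall>(a::complex^'k^'m) (b::complex^'n^'k). norm (a ** b) \<le> norm a * norm b * K"
  proof (intro exI allI)
    fix a :: "complex^'k^'m" and b :: "complex^'n^'k"
    have "\<And>i j. norm ((a ** b)$i$j) \<le> real CARD('k) * (norm a * norm b)"
    proof -
      fix i j
      have "norm ((a ** b)$i$j) = norm (\<Sum>k\<in>UNIV. a$i$k * b$k$j)"
        by (simp add: matrix_matrix_mult_def)
      also have "\<dots> \<le> (\<Sum>k\<in>UNIV. norm (a$i$k * b$k$j))" by (rule norm_sum)
      also have "\<dots> \<le> (\<Sum>k\<in>(UNIV::'k set). norm a * norm b)"
      proof (rule sum_mono)
        fix k
        have "norm (a$i$k) \<le> norm a"
          by (meson nth_le_vec order_trans)
        moreover have "norm (b$k$j) \<le> norm b"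
          by (meson nth_le_vec order_trans)
        ultimately show "norm (a$i$k * b$k$j) \<le> norm a * norm b"
          by (simp add: norm_mult mult_mono)
      qed
      finally show "norm ((a ** b)$i$j) \<le> real CARD('k) * (norm a * norm b)" by simp
    qed
    then have "norm (a ** b) \<le> real CARD('m) * real CARD('n) * (real CARD('k) * (norm a * norm b))"
      by (rule norm_mat_le)
    then show "norm (a ** b) \<le> norm a * norm b * (real CARD('m) * real CARD('n) * real CARD('k))"
      by (simp add: algebra_simps)
  qed
qed

lemma bb_mv: "bounded_bilinear ((*v) :: complex^'n^'m \<Rightarrow> complex^'n \<Rightarrow> complex^'m)"
proof
  fix a a' :: "complex^'n^'m" and b b' :: "complex^'n" and r :: real
  show "(a + a') *v b = a *v b + a' *v b" by (simp add: matrix_vector_mult_add_rdistrib)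
  show "a *v (b + b') = a *v b + a *v b'" by (simp add: matrix_vector_right_distrib)
  show "(r *\<^sub>R a) *v b = r *\<^sub>R (a *v b)"
    by (simp add: matrix_vector_mult_def vec_eq_iff scaleR_sum_right)
  show "a *v (r *\<^sub>R b) = r *\<^sub>R (a *v b)"
    by (simp add: matrix_vector_mult_def vec_eq_iff scaleR_sum_right)
next
  show "\<exists>K. \<forall>(a::complex^'n^'m) (b::complex^'n). norm (a *v b) \<le> norm a * norm b * K"
  proof (intro exI allI)
    fix a :: "complex^'n^'m" and b :: "complex^'n"
    have "\<And>i. norm ((a *v b)$i) \<le> real CARD('n) * (norm a * norm b)"
    proof -
      fix i
      have "norm ((a *v b)$i) = norm (\<Sum>k\<in>UNIV. a$i$k * b$k)"
        by (simp add: matrix_vector_mult_def)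
      also have "\<dots> \<le> (\<Sum>k\<in>UNIV. norm (a$i$k * b$k))" by (rule norm_sum)
      also have "\<dots> \<le> (\<Sum>k\<in>(UNIV::'n set). norm a * norm b)"
      proof (rule sum_mono)
        fix k
        have "norm (a$i$k) \<le> norm a"
          by (meson nth_le_vec order_trans)
        moreover have "norm (b$k) \<le> norm b"
          by (meson nth_le_vec order_trans)
        ultimately show "norm (a$i$k * b$k) \<le> norm a * norm b"
          by (simp add: norm_mult mult_mono)
      qed
      finally show "norm ((a *v b)$i) \<le> real CARD('n) * (norm a * norm b)" by simp
    qed
    then have "norm (a *v b) \<le> real CARD('m) * (real CARD('n) * (norm a * norm b))"
      by (rule norm_vec_le)
    then show "norm (a *v b) \<le> norm a * norm b * (real CARD('m) * real CARD('n))"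
      by (simp add: algebra_simps)
  qed
qed



lemma ac_cont:
  assumes "abs_cont_on f a b" shows "continuous_on {a..b} f"
  unfolding continuous_on_iff
proof (intro ballI allI impI)
  fix x e :: real assume x: "x \<in> {a..b}" and e: "0 < e"
  obtain d where d: "d > 0" and H: "\<forall>N (u::nat\<Rightarrow>real) v.
        (\<forall>k<N. a \<le> u k \<and> u k \<le> v k \<and> v k \<le> b) \<and>
        (\<forall>i<N. \<forall>j<N. i \<noteq> j \<longrightarrow> v i \<le> u j \<or> v j \<le> u i) \<and>
        (\<Sum>k<N. v k - u k) < d
        \<longrightarrow> (\<Sum>k<N. norm (f (v k) - f (u k))) < e"
    proof -
      have "\<exists>d>0. \<forall>N (u::nat\<Rightarrow>real) v.
        (\<forall>k<N. a \<le> u k \<and> u k \<le> v k \<and> v k \<le> b) \<and>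
        (\<forall>i<N. \<forall>j<N. i \<noteq> j \<longrightarrow> v i \<le> u j \<or> v j \<le> u i) \<and>
        (\<Sum>k<N. v k - u k) < d
        \<longrightarrow> (\<Sum>k<N. norm (f (v k) - f (u k))) < e"
        using assms e unfolding abs_cont_on_def by simp
      then show ?thesis using that by blast
    qed
  show "\<exists>d>0. \<forall>x'\<in>{a..b}. dist x' x < d \<longrightarrow> dist (f x') (f x) < e"
  proof (intro exI conjI ballI impI)
    fix x' assume x': "x' \<in> {a..b}" and dx: "dist x' x < d"
    have "(\<Sum>k<Suc 0. norm (f ((\<lambda>_. max x x') k) - f ((\<lambda>_. min x x') k))) < e"
      using x x' dx by (intro H[rule_format]) (auto simp: dist_real_def)
    then show "dist (f x') (f x) < e"
      by (cases "x \<le> x'") (auto simp: dist_norm norm_minus_commute max_def min_def)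
  qed (rule d)
qed

lemma ac_lip:
  assumes f: "abs_cont_on f a b" and g: "abs_cont_on g a b" and C: "0 \<le> C"
    and L: "\<And>u v. a \<le> u \<Longrightarrow> u \<le> v \<Longrightarrow> v \<le> b \<Longrightarrow>
            norm (h v - h u) \<le> C * (norm (f v - f u) + norm (g v - g u))"
  shows "abs_cont_on h a b"
  unfolding abs_cont_on_def
proof (intro allI impI)
  fix e :: real assume e: "0 < e"
  define e' where "e' = e / (2*C+1)"
  have e': "0 < e'" using e C by (simp add: e'_def)
  obtain d1 where d1: "d1 > 0" and H1: "\<forall>N (u::nat\<Rightarrow>real) v.
        (\<forall>k<N. a \<le> u k \<and> u k \<le> v k \<and> v k \<le> b) \<and>
        (\<forall>i<N. \<forall>j<N. i \<noteq> j \<longrightarrow> v i \<le> u j \<or> v j \<le> u i) \<and>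
        (\<Sum>k<N. v k - u k) < d1
        \<longrightarrow> (\<Sum>k<N. norm (f (v k) - f (u k))) < e'"
    proof -
      have "\<exists>d>0. \<forall>N (u::nat\<Rightarrow>real) v.
        (\<forall>k<N. a \<le> u k \<and> u k \<le> v k \<and> v k \<le> b) \<and>
        (\<forall>i<N. \<forall>j<N. i \<noteq> j \<longrightarrow> v i \<le> u j \<or> v j \<le> u i) \<and>
        (\<Sum>k<N. v k - u k) < d
        \<longrightarrow> (\<Sum>k<N. norm (f (v k) - f (u k))) < e'"
        using f e' unfolding abs_cont_on_def by simp
      then show ?thesis using that by blast
    qed
  obtain d2 where d2: "d2 > 0" and H2: "\<forall>N (u::nat\<Rightarrow>real) v.
        (\<forall>k<N. a \<le> u k \<and> u k \<le> v k \<and> v k \<le> b) \<and>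
        (\<forall>i<N. \<forall>j<N. i \<noteq> j \<longrightarrow> v i \<le> u j \<or> v j \<le> u i) \<and>
        (\<Sum>k<N. v k - u k) < d2
        \<longrightarrow> (\<Sum>k<N. norm (g (v k) - g (u k))) < e'"
    proof -
      have "\<exists>d>0. \<forall>N (u::nat\<Rightarrow>real) v.
        (\<forall>k<N. a \<le> u k \<and> u k \<le> v k \<and> v k \<le> b) \<and>
        (\<forall>i<N. \<forall>j<N. i \<noteq> j \<longrightarrow> v i \<le> u j \<or> v j \<le> u i) \<and>
        (\<Sum>k<N. v k - u k) < d
        \<longrightarrow> (\<Sum>k<N. norm (g (v k) - g (u k))) < e'"
        using g e' unfolding abs_cont_on_def by simp
      then show ?thesis using that by blast
    qed
  show "\<exists>d>0. \<forall>(N::nat) (u::nat\<Rightarrow>real) v. (\<forall>k<N. a \<le> u k \<and> u k \<le> v k \<and> v k \<le> b) \<and>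
        (\<forall>i<N. \<forall>j<N. i \<noteq> j \<longrightarrow> v i \<le> u j \<or> v j \<le> u i) \<and>
        (\<Sum>k<N. v k - u k) < d \<longrightarrow> (\<Sum>k<N. norm (h (v k) - h (u k))) < e"
  proof (rule exI[of _ "min d1 d2"], intro conjI allI impI)
    show "0 < min d1 d2" using d1 d2 by simp
    fix N and u v :: "nat \<Rightarrow> real"
    assume A: "(\<forall>k<N. a \<le> u k \<and> u k \<le> v k \<and> v k \<le> b) \<and>
        (\<forall>i<N. \<forall>j<N. i \<noteq> j \<longrightarrow> v i \<le> u j \<or> v j \<le> u i) \<and>
        (\<Sum>k<N. v k - u k) < min d1 d2"
    have s1: "(\<Sum>k<N. norm (f (v k) - f (u k))) < e'" using A by (intro H1[rule_format]) auto
    have s2: "(\<Sum>k<N. norm (g (v k) - g (u k))) < e'" using A by (intro H2[rule_format]) auto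
    have "(\<Sum>k<N. norm (h (v k) - h (u k))) \<le> (\<Sum>k<N. C * (norm (f (v k) - f (u k)) + norm (g (v k) - g (u k))))"
      using A by (intro sum_mono L) auto
    also have "\<dots> = C * ((\<Sum>k<N. norm (f (v k) - f (u k))) + (\<Sum>k<N. norm (g (v k) - g (u k))))"
      by (simp add: sum_distrib_left sum.distrib distrib_left)
    also have "\<dots> \<le> C * (2 * e')"
      using s1 s2 C by (intro mult_left_mono) auto
    also have "\<dots> < e"
      using e C unfolding e'_def by (simp add: field_simps)
    finally show "(\<Sum>k<N. norm (h (v k) - h (u k))) < e" .
  qed
qed

lemma ac_bounded:
  fixes f :: "real \<Rightarrow> 'a::real_normed_vector"
  assumes "abs_cont_on f a b" obtains B where "B > 0" "\<And>x. x \<in> {a..b} \<Longrightarrow> norm (f x) \<le> B"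
proof -
  have "compact (f ` {a..b})"
    using ac_cont[OF assms] by (intro compact_continuous_image) auto
  then obtain B where "B > 0" "\<forall>y\<in>f ` {a..b}. norm y \<le> B"
    using compact_imp_bounded bounded_pos by metis
  then show ?thesis using that by auto
qed

lemma ac_bilin:
  assumes bb: "bounded_bilinear pr" and f: "abs_cont_on f a b" and g: "abs_cont_on g a b"
  shows "abs_cont_on (\<lambda>x. pr (f x) (g x)) a b"
proof -
  obtain Bf where Bf: "Bf > 0" "\<And>x. x \<in> {a..b} \<Longrightarrow> norm (f x) \<le> Bf" using ac_bounded[OF f] by blast
  obtain Bg where Bg: "Bg > 0" "\<And>x. x \<in> {a..b} \<Longrightarrow> norm (g x) \<le> Bg" using ac_bounded[OF g] by blast
  obtain K where K: "K > 0" "\<And>x y. norm (pr x y) \<le> norm x * norm y * K"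
    using bounded_bilinear.pos_bounded[OF bb] by blast
  show ?thesis
  proof (rule ac_lip[OF f g, of "K * (Bf + Bg)"])
    show "0 \<le> K * (Bf + Bg)" using K Bf Bg by simp
    fix u v assume uv: "a \<le> u" "u \<le> v" "v \<le> b"
    have eq: "pr (f v) (g v) - pr (f u) (g u) = pr (f v - f u) (g v) + pr (f u) (g v - g u)"
      by (simp add: bounded_bilinear.diff_left[OF bb] bounded_bilinear.diff_right[OF bb])
    have "norm (pr (f v) (g v) - pr (f u) (g u)) \<le> norm (pr (f v - f u) (g v)) + norm (pr (f u) (g v - g u))"
      unfolding eq by (rule norm_triangle_ineq)
    also have "\<dots> \<le> norm (f v - f u) * norm (g v) * K + norm (f u) * norm (g v - g u) * K"
      by (intro add_mono K)
    also have "\<dots> \<le> norm (f v - f u) * Bg * K + Bf * norm (g v - g u) * K"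
      using uv K by (intro add_mono mult_right_mono mult_left_mono Bf Bg) auto
    also have "\<dots> \<le> K * (Bf + Bg) * (norm (f v - f u) + norm (g v - g u))"
    proof -
      have e: "K * (Bf + Bg) * (norm (f v - f u) + norm (g v - g u)) =
        norm (f v - f u) * Bg * K + Bf * norm (g v - g u) * K +
        (K * Bf * norm (f v - f u) + K * Bg * norm (g v - g u))"
        by (simp add: algebra_simps)
      have "0 \<le> K * Bf * norm (f v - f u) + K * Bg * norm (g v - g u)"
        using K Bf Bg by (intro add_nonneg_nonneg mult_nonneg_nonneg) auto
      then show ?thesis unfolding e by linarith
    qed
    finally show "norm (pr (f v) (g v) - pr (f u) (g u)) \<le> K * (Bf + Bg) * (norm (f v - f u) + norm (g v - g u))" .
  qed
qed

lemma ac_linear: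
  assumes bl: "bounded_linear h" and f: "abs_cont_on f a b"
  shows "abs_cont_on (\<lambda>x. h (f x)) a b"
proof -
  obtain K where K: "K > 0" "\<And>x. norm (h x) \<le> norm x * K"
    using bounded_linear.pos_bounded[OF bl] by blast
  show ?thesis
  proof (rule ac_lip[OF f f, of K])
    fix u v assume "a \<le> u" "u \<le> v" "v \<le> b"
    have "norm (h (f v) - h (f u)) = norm (h (f v - f u))" by (simp add: linear_diff[OF bounded_linear.linear[OF bl]])
    also have "\<dots> \<le> norm (f v - f u) * K" by (rule K)
    finally have 1: "norm (h (f v) - h (f u)) \<le> norm (f v - f u) * K" .
    have "norm (f v - f u) * K \<le> K * (norm (f v - f u) + norm (f v - f u))"
      using K by (simp add: algebra_simps)
    with 1 show "norm (h (f v) - h (f u)) \<le> K * (norm (f v - f u) + norm (f v - f u))" by linarith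
  qed (use K in auto)
qed

lemma ac_const: "abs_cont_on (\<lambda>x. c) a b"
  unfolding abs_cont_on_def by (intro allI impI exI[of _ 1]) simp

lemma ac_add:
  assumes f: "abs_cont_on f a b" and g: "abs_cont_on g a b"
  shows "abs_cont_on (\<lambda>x. f x + g x) a b"
proof (rule ac_lip[OF f g, of 1])
  fix u v
  have "norm ((f v + g v) - (f u + g u)) = norm ((f v - f u) + (g v - g u))" by (simp add: algebra_simps)
  also have "\<dots> \<le> norm (f v - f u) + norm (g v - g u)" by (rule norm_triangle_ineq)
  finally show "norm ((f v + g v) - (f u + g u)) \<le> 1 * (norm (f v - f u) + norm (g v - g u))" by simp
qed simp

lemma ac_diff:
  assumes f: "abs_cont_on f a b" and g: "abs_cont_on g a b"
  shows "abs_cont_on (\<lambda>x. f x - g x) a b"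
proof (rule ac_lip[OF f g, of 1])
  fix u v
  have "norm ((f v - g v) - (f u - g u)) = norm ((f v - f u) - (g v - g u))" by (simp add: algebra_simps)
  also have "\<dots> \<le> norm (f v - f u) + norm (g v - g u)" by (rule norm_triangle_ineq4)
  finally show "norm ((f v - g v) - (f u - g u)) \<le> 1 * (norm (f v - f u) + norm (g v - g u))" by simp
qed simp



lemma ac_deriv_zero_approx:
  fixes f :: "real \<Rightarrow> 'a::real_normed_vector"
  assumes ab: "a \<le> b" and ac: "abs_cont_on f a b" and E: "negligible E"
    and der: "\<And>x. x \<in> {a..b} \<Longrightarrow> x \<notin> E \<Longrightarrow> (f has_vector_derivative 0) (at x within {a..b})"
    and e: "0 < e" and \<epsilon>: "0 < \<epsilon>"
  shows "norm (f b - f a) \<le> e + \<epsilon> * (b - a)"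
proof -
  obtain d where d: "d > 0" and H: "\<forall>N (u::nat\<Rightarrow>real) v.
        (\<forall>k<N. a \<le> u k \<and> u k \<le> v k \<and> v k \<le> b) \<and>
        (\<forall>i<N. \<forall>j<N. i \<noteq> j \<longrightarrow> v i \<le> u j \<or> v j \<le> u i) \<and>
        (\<Sum>k<N. v k - u k) < d
        \<longrightarrow> (\<Sum>k<N. norm (f (v k) - f (u k))) < e"
  proof -
    have "\<exists>d>0. \<forall>N (u::nat\<Rightarrow>real) v.
        (\<forall>k<N. a \<le> u k \<and> u k \<le> v k \<and> v k \<le> b) \<and>
        (\<forall>i<N. \<forall>j<N. i \<noteq> j \<longrightarrow> v i \<le> u j \<or> v j \<le> u i) \<and>
        (\<Sum>k<N. v k - u k) < d
        \<longrightarrow> (\<Sum>k<N. norm (f (v k) - f (u k))) < e"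
      using ac e unfolding abs_cont_on_def by simp
    then show ?thesis using that by blast
  qed
  have Esets: "E \<in> sets lebesgue" using E by (simp add: negligible_iff_null_sets null_setsD2)
  obtain T where T: "open T" "E \<subseteq> T" "(T - E) \<in> lmeasurable" "emeasure lebesgue (T - E) < ennreal d"
    using sets_lebesgue_outer_open[OF Esets d] by blast
  have Elm: "E \<in> lmeasurable" using E by (simp add: negligible_imp_measurable)
  have TE: "T = (T - E) \<union> E" using T by auto
  have Tlm: "T \<in> lmeasurable" using T(3) Elm by (subst TE) (rule fmeasurable.Un)
  have mTE: "measure lebesgue (T - E) < d"
    using T(4) T(3) by (simp add: emeasure_eq_measure2 ennreal_less_iff)
  have mE: "measure lebesgue E = 0" using E by (simp add: negligible_imp_measure0)
  have mT: "measure lebesgue T < d"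
  proof -
    have "measure lebesgue T \<le> measure lebesgue (T - E) + measure lebesgue E"
      using T(3) Elm by (subst TE) (intro measure_Un_le; auto)
    then show ?thesis using mTE mE by simp
  qed
  have "\<forall>x. \<exists>r>0. (x \<in> T \<longrightarrow> ball x r \<subseteq> T) \<and>
          (x \<in> {a..b} \<and> x \<notin> T \<longrightarrow> (\<forall>y\<in>{a..b}. dist y x < r \<longrightarrow> norm (f y - f x) \<le> \<epsilon> * dist y x))"
  proof
    fix x
    show "\<exists>r>0. (x \<in> T \<longrightarrow> ball x r \<subseteq> T) \<and>
          (x \<in> {a..b} \<and> x \<notin> T \<longrightarrow> (\<forall>y\<in>{a..b}. dist y x < r \<longrightarrow> norm (f y - f x) \<le> \<epsilon> * dist y x))"
    proof (cases "x \<in> T")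
      case True
      then obtain r where "r > 0" "ball x r \<subseteq> T" using T(1) open_contains_ball by blast
      then show ?thesis using True by blast
    next
      case False
      show ?thesis
      proof (cases "x \<in> {a..b}")
        case True
        with False T(2) have "x \<notin> E" by blast
        with der True have "(f has_vector_derivative 0) (at x within {a..b})" by blast
        then have "(f has_derivative (\<lambda>h. h *\<^sub>R 0)) (at x within {a..b})"
          by (simp add: has_vector_derivative_def)
        then obtain r where r: "r > 0" "\<forall>y\<in>{a..b}. norm (y - x) < r \<longrightarrow> norm (f y - f x - (y - x) *\<^sub>R 0) \<le> \<epsilon> * norm (y - x)"
          using \<epsilon> unfolding has_derivative_within_alt by blast
        then show ?thesis using False by (intro exI[of _ r]) (auto simp: dist_norm)
      next
        case False
        then show ?thesis using \<open>x \<notin> T\<close> by (intro exI[of _ 1]) auto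
      qed
    qed
  qed
  then obtain r where r: "\<And>x. r x > 0" "\<And>x. x \<in> T \<Longrightarrow> ball x (r x) \<subseteq> T"
    "\<And>x y. x \<in> {a..b} \<Longrightarrow> x \<notin> T \<Longrightarrow> y \<in> {a..b} \<Longrightarrow> dist y x < r x \<Longrightarrow> norm (f y - f x) \<le> \<epsilon> * dist y x"
    by metis
  have "gauge (\<lambda>x. ball x (r x))" using r(1) by (intro gauge_ball_dependent) auto
  then obtain p where p: "p tagged_division_of {a..b}" "(\<lambda>x. ball x (r x)) fine p"
    using fine_division_exists_real by blast
  have finp: "finite p" using p(1) by blast
  have Kform: "\<exists>c d. K = {c..d} \<and> c \<le> d \<and> a \<le> c \<and> d \<le> b \<and> x \<in> K \<and> K \<subseteq> ball x (r x)" if xKin: "(x,K) \<in> p" for x K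
  proof -
    obtain c d where K: "K = cbox c d" using tagged_division_ofD(4)[OF p(1) xKin] by blast
    have xK: "x \<in> K" using tagged_division_ofD(2)[OF p(1) xKin] .
    have Kab: "K \<subseteq> {a..b}" using tagged_division_ofD(3)[OF p(1) xKin] .
    have "c \<le> d" using xK K by auto
    moreover have "a \<le> c" "d \<le> b" using Kab K \<open>c \<le> d\<close> by auto
    moreover have "K \<subseteq> ball x (r x)" using p(2) xKin unfolding fine_def by blast
    ultimately show ?thesis using K xK by auto
  qed
  define D where "D K = f (Sup K) - f (Inf K)" for K :: "real set"
  define p1 where "p1 = {(x,K) \<in> p. K \<subseteq> T \<and> Inf K < Sup K}"
  have p1p: "p1 \<subseteq> p" by (auto simp: p1_def)
  have finp1: "finite p1" using finp p1p finite_subset by blast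
  have tele: "(\<Sum>(x,K)\<in>p. D K) = f b - f a"
    unfolding D_def using additive_tagged_division_1[OF ab p(1)] by simp
  have sum_split: "(\<Sum>(x,K)\<in>p. norm (D K)) = (\<Sum>(x,K)\<in>p1. norm (D K)) + (\<Sum>(x,K)\<in>p - p1. norm (D K))"
    using finp p1p by (simp add: sum.subset_diff)
  have p2b: "norm (D K) \<le> \<epsilon> * measure lborel K" if "(x,K) \<in> p - p1" for x K
  proof -
    from that have xKp: "(x,K) \<in> p" and np1: "\<not> (K \<subseteq> T \<and> Inf K < Sup K)" by (auto simp: p1_def)
    obtain c d where cd: "K = {c..d}" "c \<le> d" "a \<le> c" "d \<le> b" "x \<in> K" "K \<subseteq> ball x (r x)"
      using Kform[OF xKp] by blast
    have IS: "Inf K = c" "Sup K = d" using cd by auto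
    have cont: "measure lborel K = d - c" using cd by (simp add: content_real)
    show ?thesis
    proof (cases "c = d")
      case True then show ?thesis by (simp add: D_def IS cont)
    next
      case False
      then have "\<not> K \<subseteq> T" using np1 IS cd by auto
      then have xT: "x \<notin> T" using r(2) cd(6) by blast
      have xab: "x \<in> {a..b}" using cd by auto
      have cin: "c \<in> {a..b}" "d \<in> {a..b}" using cd by auto
      have "c \<in> K" "d \<in> K" using cd by auto
      then have "c \<in> ball x (r x)" "d \<in> ball x (r x)" using cd(6) by blast+
      then have cb: "dist c x < r x" "dist d x < r x" by (auto simp: dist_commute)
      have "norm (f d - f c) \<le> norm (f d - f x) + norm (f c - f x)"
      proof -
        have "f d - f c = (f d - f x) - (f c - f x)" by simp
        then show ?thesis by (metis norm_triangle_ineq4)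
      qed
      also have "\<dots> \<le> \<epsilon> * dist d x + \<epsilon> * dist c x"
        using r(3)[OF xab xT cin(2) cb(2)] r(3)[OF xab xT cin(1) cb(1)] by (rule add_mono)
      also have "\<dots> = \<epsilon> * (d - c)" using cd by (simp add: dist_real_def algebra_simps)
      finally show ?thesis by (simp add: D_def IS cont)
    qed
  qed
  have sum2: "(\<Sum>(x,K)\<in>p - p1. norm (D K)) \<le> \<epsilon> * (b - a)"
  proof -
    have "(\<Sum>(x,K)\<in>p - p1. norm (D K)) \<le> (\<Sum>(x,K)\<in>p - p1. \<epsilon> * measure lborel K)"
      using p2b by (intro sum_mono) auto
    also have "\<dots> \<le> (\<Sum>(x,K)\<in>p. \<epsilon> * measure lborel K)"
      using finp \<epsilon> by (intro sum_mono2) auto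
    also have "\<dots> = \<epsilon> * (\<Sum>(x,K)\<in>p. measure lborel K)" by (simp add: sum_distrib_left case_prod_unfold)
    also have "(\<Sum>(x,K)\<in>p. measure lborel K) = measure lborel (cbox a b)"
      using p(1) by (intro additive_content_tagged_division) simp
    also have "measure lborel (cbox a b) = b - a" using ab by simp
    finally show ?thesis .
  qed
  have p1K: "\<exists>c d. K = {c..d} \<and> c < d \<and> a \<le> c \<and> d \<le> b \<and> K \<subseteq> T" if "(x,K) \<in> p1" for x K
  proof -
    have xKp: "(x,K) \<in> p" and KT: "K \<subseteq> T" "Inf K < Sup K" using that by (auto simp: p1_def)
    obtain c d where cd: "K = {c..d}" "c \<le> d" "a \<le> c" "d \<le> b"
      using Kform[OF xKp] by blast
    then show ?thesis using KT by auto
  qed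
  have disj: "Sup K1 \<le> Inf K2 \<or> Sup K2 \<le> Inf K1" if th: "(x1,K1) \<in> p1" "(x2,K2) \<in> p1" "(x1,K1) \<noteq> (x2,K2)" for x1 K1 x2 K2
  proof -
    obtain c1 d1 where 1: "K1 = {c1..d1}" "c1 < d1" using p1K[OF th(1)] by blast
    obtain c2 d2 where 2: "K2 = {c2..d2}" "c2 < d2" using p1K[OF th(2)] by blast
    have "interior K1 \<inter> interior K2 = {}"
      using tagged_division_ofD(5)[OF p(1)] th p1p by blast
    then have i: "{c1<..<d1} \<inter> {c2<..<d2} = {}" using 1 2 by simp
    show ?thesis
    proof (rule ccontr)
      assume "\<not> ?thesis"
      then have "c2 < d1" "c1 < d2" using 1 2 by auto
      define z where "z = (max c1 c2 + min d1 d2) / 2"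
      have "z \<in> {c1<..<d1} \<inter> {c2<..<d2}" using 1 2 \<open>c2 < d1\<close> \<open>c1 < d2\<close>
        by (auto simp: z_def max_def min_def)
      with i show False by blast
    qed
  qed
  have injsnd: "inj_on snd p1"
  proof (rule inj_onI)
    fix u v assume uv: "u \<in> p1" "v \<in> p1" "snd u = snd v"
    obtain x1 K1 where u: "u = (x1,K1)" by (cases u)
    obtain x2 K2 where v: "v = (x2,K2)" by (cases v)
    show "u = v"
    proof (rule ccontr)
      assume "u \<noteq> v"
      then have "Sup K1 \<le> Inf K2 \<or> Sup K2 \<le> Inf K1" using disj uv u v by blast
      moreover have "K1 = K2" using uv u v by simp
      moreover have "Inf K1 < Sup K1" using uv(1) u by (auto simp: p1_def)
      ultimately show False by auto
    qed
  qed
  have sumlen: "(\<Sum>(x,K)\<in>p1. measure lborel K) < d"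
  proof -
    have "(\<Sum>(x,K)\<in>p1. measure lborel K) = (\<Sum>K\<in>snd ` p1. measure lborel K)"
      using injsnd by (simp add: sum.reindex case_prod_unfold)
    also have "\<dots> = (\<Sum>K\<in>snd ` p1. measure lebesgue K)"
    proof (rule sum.cong[OF refl])
      fix K assume "K \<in> snd ` p1"
      then obtain x where "(x,K) \<in> p1" by auto
      then obtain c d where "K = {c..d}" using p1K by blast
      then show "measure lborel K = measure lebesgue K"
        by (simp add: measure_completion)
    qed
    also have "\<dots> = measure lebesgue (\<Union>(snd ` p1))"
    proof (rule content_division)
      have dv: "snd ` p division_of {a..b}" using division_of_tagged_division[OF p(1)] .
      then have "\<Union>(snd ` p) = {a..b}" by (rule division_ofD(6))
      with dv have "snd ` p division_of \<Union>(snd ` p)" by simp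
      then show "snd ` p1 division_of \<Union>(snd ` p1)"
        by (rule division_of_subset) (use p1p in auto)
    qed
    also have "\<dots> \<le> measure lebesgue T"
    proof (rule measure_mono_fmeasurable)
      show "\<Union>(snd ` p1) \<subseteq> T" using p1K by fastforce
      show "\<Union>(snd ` p1) \<in> sets lebesgue"
        using finp1 p1K by (intro sets.finite_Union) fastforce+
      show "T \<in> lmeasurable" by (rule Tlm)
    qed
    finally show ?thesis using mT by linarith
  qed
  obtain g where g: "bij_betw g {0..<card p1} p1" using ex_bij_betw_nat_finite[OF finp1] by blast
  define N where "N = card p1"
  define u where "u k = Inf (snd (g k))" for k
  define v where "v k = Sup (snd (g k))" for k
  have gN: "g k \<in> p1" if "k < N" for k using g that unfolding N_def bij_betw_def by auto
  have sum1: "(\<Sum>(x,K)\<in>p1. norm (D K)) < e"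
  proof -
    have r1: "(\<Sum>(x,K)\<in>p1. norm (D K)) = (\<Sum>k<N. norm (f (v k) - f (u k)))"
      unfolding N_def lessThan_atLeast0 u_def v_def D_def
      by (subst sum.reindex_bij_betw[OF g, symmetric]) (simp add: case_prod_unfold)
    have r2: "(\<Sum>(x,K)\<in>p1. measure lborel K) = (\<Sum>k<N. v k - u k)"
    proof -
      have "(\<Sum>(x,K)\<in>p1. measure lborel K) = (\<Sum>k<N. measure lborel (snd (g k)))"
        unfolding N_def lessThan_atLeast0
        by (subst sum.reindex_bij_betw[OF g, symmetric]) (simp add: case_prod_unfold)
      also have "\<dots> = (\<Sum>k<N. v k - u k)"
      proof (rule sum.cong[OF refl])
        fix k assume "k \<in> {..<N}"
        then have "g k \<in> p1" using gN by auto
        then obtain x K where xK: "g k = (x,K)" "(x,K) \<in> p1" by (cases "g k") auto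
        then obtain c d where "K = {c..d}" "c < d" using p1K by blast
        then show "measure lborel (snd (g k)) = v k - u k" using xK by (simp add: u_def v_def content_real)
      qed
      finally show ?thesis .
    qed
    have "(\<Sum>k<N. norm (f (v k) - f (u k))) < e"
    proof (rule H[rule_format], intro conjI allI impI)
      fix k assume "k < N"
      then have "g k \<in> p1" using gN by auto
      then obtain x K where xK: "g k = (x,K)" "(x,K) \<in> p1" by (cases "g k") auto
      then obtain c d where "K = {c..d}" "c < d" "a \<le> c" "d \<le> b" using p1K by blast
      then show "a \<le> u k" "u k \<le> v k" "v k \<le> b" using xK by (auto simp: u_def v_def)
    next
      fix i j assume ij: "i < N" "j < N" "i \<noteq> j"
      have gi: "g i \<in> p1" "g j \<in> p1" using gN ij by auto
      have "g i \<noteq> g j" using g ij unfolding bij_betw_def inj_on_def N_def by auto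
      then show "v i \<le> u j \<or> v j \<le> u i"
        using disj[of "fst (g i)" "snd (g i)" "fst (g j)" "snd (g j)"] gi
        by (simp add: u_def v_def)
    next
      show "(\<Sum>k<N. v k - u k) < d" using sumlen r2 by simp
    qed
    then show ?thesis using r1 by simp
  qed
  have "norm (f b - f a) = norm (\<Sum>(x,K)\<in>p. D K)" using tele by simp
  also have "\<dots> \<le> (\<Sum>(x,K)\<in>p. norm (D K))"
    unfolding case_prod_unfold by (rule norm_sum)
  also have "\<dots> \<le> e + \<epsilon> * (b - a)" using sum_split sum1 sum2 by simp
  finally show ?thesis .
qed

lemma ac_deriv_zero:
  fixes f :: "real \<Rightarrow> 'a::real_normed_vector"
  assumes ab: "a \<le> b" and ac: "abs_cont_on f a b" and E: "negligible E"
    and der: "\<And>x. x \<in> {a..b} \<Longrightarrow> x \<notin> E \<Longrightarrow> (f has_vector_derivative 0) (at x within {a..b})"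
  shows "f b = f a"
proof (rule ccontr)
  assume ne: "f b \<noteq> f a"
  define \<eta> where "\<eta> = norm (f b - f a)"
  have \<eta>: "\<eta> > 0" using ne by (simp add: \<eta>_def)
  have "\<eta> \<le> \<eta>/3 + (\<eta> / (3 * (b - a + 1))) * (b - a)"
    unfolding \<eta>_def using \<eta> ab by (intro ac_deriv_zero_approx[OF ab ac E der]) (auto simp: \<eta>_def)
  also have "(\<eta> / (3 * (b - a + 1))) * (b - a) \<le> \<eta> / 3"
    using \<eta> ab by (simp add: field_simps)
  finally show False using \<eta> by linarith
qed



lemma minv:
  assumes "invertible (A::'a::semiring_1^'n^'m)"
  shows "A ** matrix_inv A = mat 1" "matrix_inv A ** A = mat 1"
proof -
  have "\<exists>A'::'a^'m^'n. A ** A' = mat 1 \<and> A' ** A = mat 1" using assms by (simp add: invertible_def)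
  then have "A ** matrix_inv A = mat 1 \<and> matrix_inv A ** A = mat 1"
    unfolding matrix_inv_def by (rule someI_ex)
  then show "A ** matrix_inv A = mat 1" "matrix_inv A ** A = mat 1" by auto
qed

lemma vd_iff:
  fixes f :: "real \<Rightarrow> 'a::real_normed_vector"
  shows "(f has_vector_derivative D) (at x within U) \<longleftrightarrow> ((\<lambda>y. (f y - f x) /\<^sub>R (y - x)) \<longlongrightarrow> D) (at x within U)"
proof -
  have "(f has_vector_derivative D) (at x within U) \<longleftrightarrow>
      ((\<lambda>y. (1 / norm(y - x)) *\<^sub>R (f y - (f x + (y - x) *\<^sub>R D))) \<longlongrightarrow> 0) (at x within U)"
    unfolding has_vector_derivative_def has_derivative_within by (simp add: bounded_linear_scaleR_left)
  also have "\<dots> \<longleftrightarrow> ((\<lambda>y. norm ((1 / norm(y - x)) *\<^sub>R (f y - (f x + (y - x) *\<^sub>R D)))) \<longlongrightarrow> 0) (at x within U)"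
    by (rule tendsto_norm_zero_iff[symmetric])
  also have "\<dots> \<longleftrightarrow> ((\<lambda>y. norm ((f y - f x) /\<^sub>R (y - x) - D)) \<longlongrightarrow> 0) (at x within U)"
  proof (rule tendsto_cong)
    show "\<forall>\<^sub>F y in at x within U. norm ((1 / norm (y - x)) *\<^sub>R (f y - (f x + (y - x) *\<^sub>R D))) =
             norm ((f y - f x) /\<^sub>R (y - x) - D)"
      unfolding eventually_at_filter
    proof (rule always_eventually, intro allI impI)
      fix y :: real assume "y \<noteq> x"
      then have 1: "(y - x) *\<^sub>R ((f y - f x) /\<^sub>R (y - x)) = f y - f x" by simp
      have "(y - x) *\<^sub>R ((f y - f x) /\<^sub>R (y - x) - D) = (y - x) *\<^sub>R ((f y - f x) /\<^sub>R (y - x)) - (y - x) *\<^sub>R D"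
        by (rule scaleR_right_diff_distrib)
      then have "f y - (f x + (y - x) *\<^sub>R D) = (y - x) *\<^sub>R ((f y - f x) /\<^sub>R (y - x) - D)"
        unfolding 1 by (simp add: algebra_simps)
      then show "norm ((1 / norm (y - x)) *\<^sub>R (f y - (f x + (y - x) *\<^sub>R D))) = norm ((f y - f x) /\<^sub>R (y - x) - D)"
        using \<open>y \<noteq> x\<close> by simp
    qed
  qed
  also have "\<dots> \<longleftrightarrow> ((\<lambda>y. (f y - f x) /\<^sub>R (y - x) - D) \<longlongrightarrow> 0) (at x within U)"
    by (rule tendsto_norm_zero_iff)
  also have "\<dots> \<longleftrightarrow> ((\<lambda>y. (f y - f x) /\<^sub>R (y - x)) \<longlongrightarrow> D) (at x within U)"
    by (rule Lim_null[symmetric])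
  finally show ?thesis .
qed

lemma inv_tendsto:
  fixes S :: "real \<Rightarrow> complex^'n^'n"
  assumes inv: "\<And>t. t \<in> U \<Longrightarrow> invertible (S t)" and xU: "x \<in> U"
    and lim: "(S \<longlongrightarrow> S x) (at x within U)"
  shows "((\<lambda>t. matrix_inv (S t)) \<longlongrightarrow> matrix_inv (S x)) (at x within U)"
proof -
  obtain K where K: "K > 0" "\<And>(A::complex^'n^'n) (B::complex^'n^'n). norm (A ** B) \<le> norm A * norm B * K"
    using bounded_bilinear.pos_bounded[OF bb_mm] by blast
  define M where "M t = matrix_inv (S t)" for t
  define c where "c = norm (M x)"
  have c0: "c \<ge> 0" by (simp add: c_def)
  have idt: "M t - M x = M t ** (S x - S t) ** M x" if "t \<in> U" for t
  proof -
    have "M t ** (S x - S t) ** M x = (M t ** S x - M t ** S t) ** M x"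
      by (simp add: bounded_bilinear.diff_right[OF bb_mm])
    also have "\<dots> = M t ** (S x ** M x) - (M t ** S t) ** M x"
      by (simp add: bounded_bilinear.diff_left[OF bb_mm] matrix_mul_assoc)
    also have "\<dots> = M t - M x" using minv[OF inv[OF that]] minv[OF inv[OF xU]] by (simp add: M_def)
    finally show ?thesis by simp
  qed
  define \<delta> where "\<delta> = (1 / (K * K)) * (1 / (2 * (c + 1)))"
  have \<delta>: "\<delta> > 0" using K c0 by (simp add: \<delta>_def)
  have ev: "\<forall>\<^sub>F t in at x within U. dist (S t) (S x) < \<delta>"
    using lim \<delta> by (rule tendstoD)
  have bound: "norm (M t - M x) \<le> (2 * K * K * c * c) * norm (S t - S x)"
    if tU: "t \<in> U" and d: "dist (S t) (S x) < \<delta>" for t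
  proof -
    define a where "a = norm (M t)"
    define s where "s = norm (S t - S x)"
    have a0: "a \<ge> 0" and s0: "s \<ge> 0" by (simp_all add: a_def s_def)
    have sd: "s < \<delta>" using d by (simp add: s_def dist_norm)
    have "norm (M t - M x) \<le> norm (M t ** (S x - S t)) * norm (M x) * K"
      unfolding idt[OF tU] by (rule K(2))
    also have "\<dots> \<le> (a * s * K) * c * K"
    proof -
      have "norm (M t ** (S x - S t)) \<le> a * s * K"
        using K(2)[of "M t" "S x - S t"] by (simp add: a_def s_def norm_minus_commute)
      then have "norm (M t ** (S x - S t)) * norm (M x) \<le> (a * s * K) * c"
        unfolding c_def by (rule mult_right_mono) simp
      then show ?thesis using K by (intro mult_right_mono) auto
    qed
    finally have b1: "norm (M t - M x) \<le> (K * K * s * c) * a" by (simp add: algebra_simps)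
    have ks: "K * K * s * c \<le> 1/2"
    proof -
      have "K * K * s * c \<le> K * K * \<delta> * c"
        using sd K c0 s0 by (intro mult_right_mono mult_left_mono) auto
      also have "\<dots> = (K * K * (1 / (K * K))) * (c / (2 * (c + 1)))" by (simp add: \<delta>_def)
      also have "\<dots> = c / (2 * (c + 1))" using K by simp
      also have "\<dots> \<le> 1/2" using c0 by (simp add: field_simps)
      finally show ?thesis .
    qed
    have "a \<le> c + norm (M t - M x)"
      unfolding a_def c_def by (metis add.commute diff_add_cancel norm_triangle_ineq)
    also have "\<dots> \<le> c + (K * K * s * c) * a" using b1 by simp
    also have "(K * K * s * c) * a \<le> (1/2) * a" using ks a0 by (rule mult_right_mono)
    finally have a2: "a \<le> 2 * c" by simp
    have "norm (M t - M x) \<le> (K * K * s * c) * (2 * c)"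
      using b1 a2 K s0 c0 by (meson order_trans mult_left_mono mult_nonneg_nonneg zero_le_mult_iff less_imp_le)
    then show ?thesis by (simp add: s_def algebra_simps)
  qed
  have "((\<lambda>t. M t - M x) \<longlongrightarrow> 0) (at x within U)"
  proof (rule Lim_null_comparison)
    show "\<forall>\<^sub>F t in at x within U. norm (M t - M x) \<le> (2 * K * K * c * c) * norm (S t - S x)"
      using ev unfolding eventually_at_filter
      by (rule eventually_mono) (auto intro: bound)
    have "((\<lambda>t. S t - S x) \<longlongrightarrow> 0) (at x within U)" using lim by (simp add: Lim_null[symmetric])
    then have "((\<lambda>t. norm (S t - S x)) \<longlongrightarrow> 0) (at x within U)" by (simp add: tendsto_norm_zero_iff)
    then show "((\<lambda>t. (2 * K * K * c * c) * norm (S t - S x)) \<longlongrightarrow> 0) (at x within U)"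
      by (simp add: tendsto_mult_right_zero)
  qed
  then show ?thesis unfolding M_def by (simp add: Lim_null[symmetric])
qed

lemma inv_deriv:
  fixes S :: "real \<Rightarrow> complex^'n^'n"
  assumes inv: "\<And>t. t \<in> U \<Longrightarrow> invertible (S t)" and xU: "x \<in> U"
    and der: "(S has_vector_derivative S') (at x within U)"
  shows "((\<lambda>t. matrix_inv (S t)) has_vector_derivative - (matrix_inv (S x) ** S' ** matrix_inv (S x))) (at x within U)"
proof -
  define M where "M t = matrix_inv (S t)" for t
  have lim: "(S \<longlongrightarrow> S x) (at x within U)"
    using has_vector_derivative_continuous[OF der] by (simp add: continuous_within)
  have Mlim: "(M \<longlongrightarrow> M x) (at x within U)" unfolding M_def by (rule inv_tendsto[OF inv xU lim])
  have q: "((\<lambda>y. (S y - S x) /\<^sub>R (y - x)) \<longlongrightarrow> S') (at x within U)" using der by (simp add: vd_iff)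
  have q': "((\<lambda>y. - ((S y - S x) /\<^sub>R (y - x))) \<longlongrightarrow> - S') (at x within U)" using q by (rule tendsto_minus)
  have L: "((\<lambda>y. M y ** (- ((S y - S x) /\<^sub>R (y - x))) ** M x) \<longlongrightarrow> M x ** (- S') ** M x) (at x within U)"
    by (intro bounded_bilinear.tendsto[OF bb_mm] Mlim q' tendsto_const)
  have eq: "\<forall>\<^sub>F y in at x within U. M y ** (- ((S y - S x) /\<^sub>R (y - x))) ** M x = (M y - M x) /\<^sub>R (y - x)"
    unfolding eventually_at_filter
  proof (rule always_eventually, intro allI impI)
    fix y assume yx: "y \<noteq> x" and yU: "y \<in> U"
    have "M y - M x = M y ** (S x - S y) ** M x"
    proof -
      have "M y ** (S x - S y) ** M x = (M y ** S x - M y ** S y) ** M x"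
        by (simp add: bounded_bilinear.diff_right[OF bb_mm])
      also have "\<dots> = M y ** (S x ** M x) - (M y ** S y) ** M x"
        by (simp add: bounded_bilinear.diff_left[OF bb_mm] matrix_mul_assoc)
      also have "\<dots> = M y - M x" using minv[OF inv[OF yU]] minv[OF inv[OF xU]] by (simp add: M_def)
      finally show ?thesis by simp
    qed
    moreover have "M y ** (- ((S y - S x) /\<^sub>R (y - x))) ** M x = (M y ** (S x - S y) ** M x) /\<^sub>R (y - x)"
    proof -
      have "- ((S y - S x) /\<^sub>R (y - x)) = (S x - S y) /\<^sub>R (y - x)" by (simp add: scaleR_diff_right)
      then show ?thesis
        by (simp add: bounded_bilinear.scaleR_right[OF bb_mm] bounded_bilinear.scaleR_left[OF bb_mm])
    qed
    ultimately show "M y ** (- ((S y - S x) /\<^sub>R (y - x))) ** M x = (M y - M x) /\<^sub>R (y - x)" by simp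
  qed
  have "((\<lambda>y. (M y - M x) /\<^sub>R (y - x)) \<longlongrightarrow> M x ** (- S') ** M x) (at x within U)"
    using L eq by (rule Lim_transform_eventually)
  moreover have "M x ** (- S') ** M x = - (M x ** S' ** M x)"
    by (simp add: bounded_bilinear.minus_right[OF bb_mm] bounded_bilinear.minus_left[OF bb_mm])
  ultimately show ?thesis unfolding M_def by (simp add: vd_iff)
qed



lemma mat_comm:
  fixes A :: "'a::comm_semiring_1^'n^'m"
  shows "A ** mat c = mat c ** A"
  by (simp add: matrix_matrix_mult_def mat_def vec_eq_iff if_distrib if_distribR sum.delta' mult.commute cong: if_cong)

lemma smul_mv:
  fixes A :: "'a::comm_semiring_1^'n^'m"
  shows "c *s (A *v v) = (mat c ** A) *v v"
  by (simp add: matrix_vector_mul_assoc[symmetric], simp add: matrix_vector_mult_def mat_def vec_eq_iff if_distrib if_distribR sum.delta' cong: if_cong)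

definition sm :: "'a::comm_semiring_1 \<Rightarrow> 'a^'n^'m \<Rightarrow> 'a^'n^'m" where
  "sm c A = mat c ** A"

lemma sm_left: "sm c A ** B = sm c (A ** B)"
  by (simp add: sm_def matrix_mul_assoc)
lemma sm_right: "A ** sm c B = sm c (A ** B)"
  by (simp add: sm_def matrix_mul_assoc mat_comm)
lemma sm_add: "sm c (A + B) = sm c A + sm c B"
  by (simp add: sm_def matrix_add_ldistrib)
lemma sm_diff: "sm (c::'a::comm_ring_1) (A - B) = sm c A - sm c B"
  by (simp add: sm_def matrix_matrix_mult_def vec_eq_iff sum_subtractf right_diff_distrib)
lemma sm_minus: "sm (c::'a::comm_ring_1) (- A) = - sm c A"
  by (simp add: sm_def matrix_matrix_mult_def vec_eq_iff sum_negf)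
lemma sm_mv: "(c::'a::comm_semiring_1) *s (A *v v) = sm c A *v v"
  by (simp add: sm_def smul_mv)

lemmas mm_simps0 = matrix_add_ldistrib matrix_add_rdistrib'
  bounded_bilinear.diff_left[OF bb_mm] bounded_bilinear.diff_right[OF bb_mm]
  bounded_bilinear.minus_left[OF bb_mm] bounded_bilinear.minus_right[OF bb_mm]
  matrix_mul_assoc

lemmas mm_simps = matrix_add_ldistrib matrix_add_rdistrib'
  bounded_bilinear.diff_left[OF bb_mm] bounded_bilinear.diff_right[OF bb_mm]
  bounded_bilinear.minus_left[OF bb_mm] bounded_bilinear.minus_right[OF bb_mm]
  bounded_bilinear.diff_left[OF bb_mv] bounded_bilinear.diff_right[OF bb_mv]
  bounded_bilinear.minus_left[OF bb_mv] bounded_bilinear.minus_right[OF bb_mv]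
  bounded_bilinear.add_left[OF bb_mv] bounded_bilinear.add_right[OF bb_mv]
  matrix_mul_assoc matrix_vector_mul_assoc sm_left sm_right sm_add sm_diff sm_minus sm_mv

lemma key_alg:
  fixes Q1 Q0 :: "complex^'m^'m" and A1 A2 M R S :: "complex^'n^'n"
    and P1 :: "complex^'m^'n" and P2 :: "complex^'n^'m" and yv :: "complex^'m" and lam :: complex
  assumes MS: "M ** S = mat 1" and SM: "S ** M = mat 1"
    and RA: "R ** (A1 - mat lam) = mat 1" and AR: "(A1 - mat lam) ** R = mat 1"
    and idt: "A1 ** S - S ** A2 = P1 ** P2"
  shows "(mat 1 - P2 ** M ** R ** P1) *v (- (lam *s (Q1 *v yv) + Q0 *v yv))
       + (0 - (P2 ** M ** R ** (A1 ** P1 ** Q1 + P1 ** Q0)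
              + (P2 ** M ** 0 + (P2 ** (- (M ** (P1 ** Q1 ** P2) ** M)) + (- (Q1 ** P2 ** A2) - Q0 ** P2) ** M) ** R) ** P1)) *v yv
     = - (lam *s (Q1 *v ((mat 1 - P2 ** M ** R ** P1) *v yv))
          + (Q0 - (Q1 ** (P2 ** M ** P1) - (P2 ** M ** P1) ** Q1)) *v ((mat 1 - P2 ** M ** R ** P1) *v yv))"
proof -
  have RA1: "R ** A1 = mat 1 + sm lam R"
    using RA by (simp add: mm_simps0 sm_def mat_comm algebra_simps)
  have A1R: "A1 ** R = mat 1 + sm lam R"
    using AR by (simp add: mm_simps0 sm_def algebra_simps)
  have kRA1: "Z ** R ** A1 = Z + sm lam (Z ** R)" for Z :: "complex^'n^'k"
  proof -
    have "Z ** R ** A1 = Z ** (R ** A1)" by (simp add: matrix_mul_assoc)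
    also have "\<dots> = Z + sm lam (Z ** R)" unfolding RA1 by (simp add: mm_simps)
    finally show ?thesis .
  qed
  have kA1R: "Z ** A1 ** R = Z + sm lam (Z ** R)" for Z :: "complex^'n^'k"
  proof -
    have "Z ** A1 ** R = Z ** (A1 ** R)" by (simp add: matrix_mul_assoc)
    also have "\<dots> = Z + sm lam (Z ** R)" unfolding A1R by (simp add: mm_simps)
    finally show ?thesis .
  qed
  have A2M: "A2 ** M = M ** A1 - M ** P1 ** P2 ** M"
  proof -
    have "M ** (A1 ** S - S ** A2) ** M = M ** A1 - A2 ** M"
    proof -
      have "M ** (A1 ** S - S ** A2) ** M = M ** A1 ** (S ** M) - (M ** S) ** A2 ** M"
        by (simp add: mm_simps0)
      also have "\<dots> = M ** A1 - A2 ** M" using MS SM by simp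
      finally show ?thesis .
    qed
    then have "M ** A1 - A2 ** M = M ** P1 ** P2 ** M" using idt by (simp add: matrix_mul_assoc)
    then show ?thesis by (simp add: algebra_simps)
  qed
  have kA2: "Z ** A2 ** M = Z ** M ** A1 - Z ** M ** P1 ** P2 ** M" for Z :: "complex^'n^'k"
  proof -
    have "Z ** A2 ** M = Z ** (A2 ** M)" by (simp add: matrix_mul_assoc)
    also have "\<dots> = Z ** M ** A1 - Z ** M ** P1 ** P2 ** M" unfolding A2M by (simp add: mm_simps)
    finally show ?thesis .
  qed
  show ?thesis
    apply (simp add: mm_simps kA2 kRA1 kA1R)
    done
qed



lemma ac_inv:
  fixes S :: "real \<Rightarrow> complex^'n^'n"
  assumes ac: "abs_cont_on S a b" and inv: "\<And>t. t \<in> {a..b} \<Longrightarrow> invertible (S t)"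
  shows "abs_cont_on (\<lambda>t. matrix_inv (S t)) a b"
proof -
  have cS: "continuous_on {a..b} S" by (rule ac_cont[OF ac])
  have cM: "continuous_on {a..b} (\<lambda>t. matrix_inv (S t))"
    unfolding continuous_on_def
  proof
    fix x assume x: "x \<in> {a..b}"
    have "(S \<longlongrightarrow> S x) (at x within {a..b})" using cS x by (simp add: continuous_on_def)
    then show "((\<lambda>t. matrix_inv (S t)) \<longlongrightarrow> matrix_inv (S x)) (at x within {a..b})"
      using inv_tendsto[of "{a..b}" S x] inv x by blast
  qed
  have "compact ((\<lambda>t. matrix_inv (S t)) ` {a..b})"
    using cM by (intro compact_continuous_image) auto
  then obtain B where B: "B > 0" "\<forall>y\<in>(\<lambda>t. matrix_inv (S t)) ` {a..b}. norm y \<le> B"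
    using compact_imp_bounded bounded_pos by metis
  then have B': "\<And>t. t \<in> {a..b} \<Longrightarrow> norm (matrix_inv (S t)) \<le> B" by auto
  obtain K where K: "K > 0" "\<And>(A::complex^'n^'n) (B::complex^'n^'n). norm (A ** B) \<le> norm A * norm B * K"
    using bounded_bilinear.pos_bounded[OF bb_mm] by blast
  show ?thesis
  proof (rule ac_lip[OF ac ac, of "K * K * B * B"])
    show "0 \<le> K * K * B * B" using K B by simp
    fix u v assume uv: "a \<le> u" "u \<le> v" "v \<le> b"
    define Mu where "Mu = matrix_inv (S u)"
    define Mv where "Mv = matrix_inv (S v)"
    have iu: "invertible (S u)" and iv: "invertible (S v)" using inv uv by auto
    have idt: "Mv - Mu = Mv ** (S u - S v) ** Mu"
    proof -
      have "Mv ** (S u - S v) ** Mu = Mv ** (S u ** Mu) - (Mv ** S v) ** Mu"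
        by (simp add: mm_simps0)
      also have "\<dots> = Mv - Mu" using minv[OF iu] minv[OF iv] by (simp add: Mu_def Mv_def)
      finally show ?thesis by simp
    qed
    have nu: "norm Mu \<le> B" and nv: "norm Mv \<le> B" using B' uv by (auto simp: Mu_def Mv_def)
    have "norm (Mv - Mu) \<le> norm (Mv ** (S u - S v)) * norm Mu * K"
      unfolding idt by (rule K(2))
    also have "\<dots> \<le> (B * norm (S v - S u) * K) * B * K"
    proof -
      have "norm (Mv ** (S u - S v)) \<le> norm Mv * norm (S v - S u) * K"
        using K(2)[of Mv "S u - S v"] by (simp add: norm_minus_commute)
      also have "\<dots> \<le> B * norm (S v - S u) * K"
        using nv K by (intro mult_right_mono) auto
      finally have 1: "norm (Mv ** (S u - S v)) \<le> B * norm (S v - S u) * K" .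
      have "norm (Mv ** (S u - S v)) * norm Mu \<le> (B * norm (S v - S u) * K) * B"
        using 1 nu B K by (intro mult_mono) auto
      then show ?thesis using K by (intro mult_right_mono) auto
    qed
    also have "\<dots> \<le> K * K * B * B * (norm (S v - S u) + norm (S v - S u))"
      using K B by (simp add: algebra_simps)
    finally show "norm (matrix_inv (S v) - matrix_inv (S u)) \<le> K * K * B * B * (norm (S v - S u) + norm (S v - S u))"
      by (simp add: Mu_def Mv_def)
  qed
qed



theorem theorem2p1:
  fixes l :: ereal
    and Q1 Q0 :: "real \<Rightarrow> complex^'m^'m"
    and A1 A2 :: "complex^'n^'n"
    and S :: "real \<Rightarrow> complex^'n^'n"
    and Pi1 Pi2 :: "real \<Rightarrow> complex^'m^'n"
    and lam :: complex
    and y :: "real \<Rightarrow> complex^'m"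
  assumes l_pos: "0 < l"
    and Q1_sum: "loc_summable (half_line l) Q1"
    and Q0_sum: "loc_summable (half_line l) Q0"
    and ident: "A1 ** S 0 - S 0 ** A2 = Pi1 0 ** ctrans (Pi2 0)"
    and Pi1_eq: "ac_solution (half_line l) (\<lambda>x P. A1 ** P ** Q1 x + P ** Q0 x) Pi1"
    and Pi2_eq: "ac_solution (half_line l) (\<lambda>x P. - (Q1 x ** P ** A2) - Q0 x ** P)
                   (\<lambda>x. ctrans (Pi2 x))"
    and S_eq: "ac_solution (half_line l) (\<lambda>x _. Pi1 x ** Q1 x ** ctrans (Pi2 x)) S"
    and not_eig: "invertible (A1 - mat lam)"
    and y_eq: "ac_solution (half_line l) (\<lambda>x v. - (lam *s (Q1 x *v v) + Q0 x *v v)) y"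
  shows "\<forall>J. is_interval J \<and> J \<subseteq> half_line l \<and> (\<forall>x\<in>J. invertible (S x)) \<longrightarrow>
     ac_solution J
       (\<lambda>x v. - (lam *s (Q1 x *v v)
                 + (Q0 x - (Q1 x ** (ctrans (Pi2 x) ** matrix_inv (S x) ** Pi1 x)
                            - (ctrans (Pi2 x) ** matrix_inv (S x) ** Pi1 x) ** Q1 x)) *v v))
       (\<lambda>x. (mat 1 - ctrans (Pi2 x) ** matrix_inv (S x) ** matrix_inv (A1 - mat lam) ** Pi1 x) *v y x)"
proof -
  define H where "H = half_line l"
  define P2 where "P2 x = ctrans (Pi2 x)" for x
  define R where "R = matrix_inv (A1 - mat lam)"
  have acPi1: "\<And>a b. {a..b} \<subseteq> H \<Longrightarrow> abs_cont_on Pi1 a b"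
    and aePi1: "AE x in lebesgue. x \<in> H \<longrightarrow> (Pi1 has_vector_derivative (A1 ** Pi1 x ** Q1 x + Pi1 x ** Q0 x)) (at x)"
    using Pi1_eq unfolding ac_solution_def H_def by auto
  have acP2: "\<And>a b. {a..b} \<subseteq> H \<Longrightarrow> abs_cont_on P2 a b"
    and aeP2: "AE x in lebesgue. x \<in> H \<longrightarrow> (P2 has_vector_derivative (- (Q1 x ** P2 x ** A2) - Q0 x ** P2 x)) (at x)"
    using Pi2_eq unfolding ac_solution_def H_def P2_def by auto
  have acS: "\<And>a b. {a..b} \<subseteq> H \<Longrightarrow> abs_cont_on S a b"
    and aeS: "AE x in lebesgue. x \<in> H \<longrightarrow> (S has_vector_derivative (Pi1 x ** Q1 x ** P2 x)) (at x)"
    using S_eq unfolding ac_solution_def H_def P2_def by auto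
  have acy: "\<And>a b. {a..b} \<subseteq> H \<Longrightarrow> abs_cont_on y a b"
    and aey: "AE x in lebesgue. x \<in> H \<longrightarrow> (y has_vector_derivative (- (lam *s (Q1 x *v y x) + Q0 x *v y x))) (at x)"
    using y_eq unfolding ac_solution_def H_def by auto
  obtain N1 where N1: "\<And>x. x \<in> space lebesgue - N1 \<Longrightarrow> x \<in> H \<longrightarrow> (Pi1 has_vector_derivative (A1 ** Pi1 x ** Q1 x + Pi1 x ** Q0 x)) (at x)" "N1 \<in> null_sets lebesgue"
    using AE_E3[OF aePi1] by blast
  obtain N2 where N2: "\<And>x. x \<in> space lebesgue - N2 \<Longrightarrow> x \<in> H \<longrightarrow> (P2 has_vector_derivative (- (Q1 x ** P2 x ** A2) - Q0 x ** P2 x)) (at x)" "N2 \<in> null_sets lebesgue"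
    using AE_E3[OF aeP2] by blast
  obtain N3 where N3: "\<And>x. x \<in> space lebesgue - N3 \<Longrightarrow> x \<in> H \<longrightarrow> (S has_vector_derivative (Pi1 x ** Q1 x ** P2 x)) (at x)" "N3 \<in> null_sets lebesgue"
    using AE_E3[OF aeS] by blast
  obtain N4 where N4: "\<And>x. x \<in> space lebesgue - N4 \<Longrightarrow> x \<in> H \<longrightarrow> (y has_vector_derivative (- (lam *s (Q1 x *v y x) + Q0 x *v y x))) (at x)" "N4 \<in> null_sets lebesgue"
    using AE_E3[OF aey] by blast
  define N where "N = N1 \<union> N2 \<union> N3 \<union> N4"
  have Nnull: "N \<in> null_sets lebesgue" unfolding N_def by (intro null_sets.Un N1(2) N2(2) N3(2) N4(2))
  have Nneg: "negligible N" using Nnull by (simp add: negligible_iff_null_sets)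
  have dPi1: "(Pi1 has_vector_derivative (A1 ** Pi1 x ** Q1 x + Pi1 x ** Q0 x)) (at x)" if "x \<in> H" "x \<notin> N" for x
    using N1(1)[of x] that by (auto simp: N_def)
  have dP2: "(P2 has_vector_derivative (- (Q1 x ** P2 x ** A2) - Q0 x ** P2 x)) (at x)" if "x \<in> H" "x \<notin> N" for x
    using N2(1)[of x] that by (auto simp: N_def)
  have dS: "(S has_vector_derivative (Pi1 x ** Q1 x ** P2 x)) (at x)" if "x \<in> H" "x \<notin> N" for x
    using N3(1)[of x] that by (auto simp: N_def)
  have dy: "(y has_vector_derivative (- (lam *s (Q1 x *v y x) + Q0 x *v y x))) (at x)" if "x \<in> H" "x \<notin> N" for x
    using N4(1)[of x] that by (auto simp: N_def)
  have idt: "A1 ** S x - S x ** A2 = Pi1 x ** P2 x" if xH: "x \<in> H" for x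
  proof -
    define D where "D t = A1 ** S t - S t ** A2 - Pi1 t ** P2 t" for t
    have x0: "0 \<le> x" using xH by (simp add: H_def half_line_def)
    have sub: "{0..x} \<subseteq> H"
    proof
      fix t assume t: "t \<in> {0..x}"
      have "ereal t \<le> ereal x" using t by simp
      also have "ereal x < l" using xH by (simp add: H_def half_line_def)
      finally show "t \<in> H" using t by (simp add: H_def half_line_def)
    qed
    have acD: "abs_cont_on D 0 x"
      unfolding D_def
      by (intro ac_diff ac_bilin[OF bb_mm] ac_const acS acPi1 acP2 sub)
    have "D x = D 0"
    proof (rule ac_deriv_zero[OF x0 acD Nneg])
      fix t assume t: "t \<in> {0..x}" "t \<notin> N"
      then have tH: "t \<in> H" using sub by blast
      have "(D has_vector_derivative
          ((A1 ** (Pi1 t ** Q1 t ** P2 t) + 0 ** S t) - (S t ** 0 + (Pi1 t ** Q1 t ** P2 t) ** A2)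
            - (Pi1 t ** (- (Q1 t ** P2 t ** A2) - Q0 t ** P2 t) + (A1 ** Pi1 t ** Q1 t + Pi1 t ** Q0 t) ** P2 t))) (at t)"
        unfolding D_def
        by (intro has_vector_derivative_diff bounded_bilinear.has_vector_derivative[OF bb_mm]
            has_vector_derivative_const dS[OF tH t(2)] dPi1[OF tH t(2)] dP2[OF tH t(2)])
      moreover have "((A1 ** (Pi1 t ** Q1 t ** P2 t) + 0 ** S t) - (S t ** 0 + (Pi1 t ** Q1 t ** P2 t) ** A2)
            - (Pi1 t ** (- (Q1 t ** P2 t ** A2) - Q0 t ** P2 t) + (A1 ** Pi1 t ** Q1 t + Pi1 t ** Q0 t) ** P2 t)) = 0"
        by (simp add: mm_simps0)
      ultimately show "(D has_vector_derivative 0) (at t within {0..x})"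
        by (auto intro: has_vector_derivative_at_within)
    qed
    also have "D 0 = 0" using ident by (simp add: D_def P2_def)
    finally show ?thesis by (simp add: D_def)
  qed
  have Rinv: "R ** (A1 - mat lam) = mat 1" "(A1 - mat lam) ** R = mat 1"
    using minv[OF not_eig] by (auto simp: R_def)
  show ?thesis
  proof (intro allI impI, elim conjE)
    fix J :: "real set"
    assume Jint: "is_interval J" and JH: "J \<subseteq> half_line l" and Jinv: "\<forall>x\<in>J. invertible (S x)"
    define M where "M x = matrix_inv (S x)" for x
    define g where "g x = (mat 1 - P2 x ** M x ** R ** Pi1 x) *v y x" for x
    have "ac_solution J
       (\<lambda>x v. - (lam *s (Q1 x *v v)
                 + (Q0 x - (Q1 x ** (P2 x ** M x ** Pi1 x)
                            - (P2 x ** M x ** Pi1 x) ** Q1 x)) *v v)) g"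
      unfolding ac_solution_def
    proof (intro conjI allI impI)
      fix a b assume ab: "{a..b} \<subseteq> J"
      then have abH: "{a..b} \<subseteq> H" using JH by (auto simp: H_def)
      have acM: "abs_cont_on M a b"
        unfolding M_def using ab Jinv by (intro ac_inv acS abH) auto
      show "abs_cont_on g a b"
        unfolding g_def
        by (intro ac_bilin[OF bb_mv] ac_diff ac_const ac_bilin[OF bb_mm] acP2 acPi1 acy abH acM)
    next
      have fneg: "negligible (frontier J)"
        by (rule negligible_convex_frontier) (rule is_interval_convex[OF Jint])
      have nullF: "N \<union> frontier J \<in> null_sets lebesgue"
      proof -
        have "frontier J \<in> null_sets lebesgue" using fneg by (simp add: negligible_iff_null_sets)
        then show ?thesis using Nnull by (intro null_sets.Un)
      qed
      show "AE x in lebesgue. x \<in> J \<longrightarrow> (g has_vector_derivative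
              - (lam *s (Q1 x *v g x) + (Q0 x - (Q1 x ** (P2 x ** M x ** Pi1 x) - P2 x ** M x ** Pi1 x ** Q1 x)) *v g x)) (at x)"
      proof (rule AE_I'[OF nullF], rule subsetI, rule ccontr)
        fix x assume xin: "x \<in> {x \<in> space lebesgue. \<not> (x \<in> J \<longrightarrow> (g has_vector_derivative
              - (lam *s (Q1 x *v g x) + (Q0 x - (Q1 x ** (P2 x ** M x ** Pi1 x) - P2 x ** M x ** Pi1 x ** Q1 x)) *v g x)) (at x))}"
          and xn: "x \<notin> N \<union> frontier J"
        have xJ: "x \<in> J" and xN: "x \<notin> N" and xF: "x \<notin> frontier J" using xin xn by auto
        have notd: "\<not> (g has_vector_derivative
              - (lam *s (Q1 x *v g x) + (Q0 x - (Q1 x ** (P2 x ** M x ** Pi1 x) - P2 x ** M x ** Pi1 x ** Q1 x)) *v g x)) (at x)"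
          using xin by auto
        have xH: "x \<in> H" using xJ JH by (auto simp: H_def)
        have xint: "x \<in> interior J" using xJ xF closure_subset[of J] by (auto simp: frontier_def)
        have invI: "\<And>t. t \<in> interior J \<Longrightarrow> invertible (S t)" using Jinv interior_subset by blast
        have dSi: "(S has_vector_derivative (Pi1 x ** Q1 x ** P2 x)) (at x within interior J)"
          using dS[OF xH xN] by (rule has_vector_derivative_at_within)
        have dM: "(M has_vector_derivative - (M x ** (Pi1 x ** Q1 x ** P2 x) ** M x)) (at x)"
        proof -
          have "((\<lambda>t. matrix_inv (S t)) has_vector_derivative - (matrix_inv (S x) ** (Pi1 x ** Q1 x ** P2 x) ** matrix_inv (S x))) (at x within interior J)"
            by (rule inv_deriv[OF invI xint dSi])
          then show ?thesis using at_within_open[OF xint open_interior] by (simp add: M_def[abs_def])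
        qed
        have dX2: "((\<lambda>t. P2 t ** M t) has_vector_derivative
            (P2 x ** (- (M x ** (Pi1 x ** Q1 x ** P2 x) ** M x)) + (- (Q1 x ** P2 x ** A2) - Q0 x ** P2 x) ** M x)) (at x)"
          by (rule bounded_bilinear.has_vector_derivative[OF bb_mm dP2[OF xH xN] dM])
        have dX3: "((\<lambda>t. P2 t ** M t ** R) has_vector_derivative
            (P2 x ** M x ** 0 + (P2 x ** (- (M x ** (Pi1 x ** Q1 x ** P2 x) ** M x)) + (- (Q1 x ** P2 x ** A2) - Q0 x ** P2 x) ** M x) ** R)) (at x)"
          by (rule bounded_bilinear.has_vector_derivative[OF bb_mm dX2 has_vector_derivative_const])
        have dX4: "((\<lambda>t. P2 t ** M t ** R ** Pi1 t) has_vector_derivative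
            (P2 x ** M x ** R ** (A1 ** Pi1 x ** Q1 x + Pi1 x ** Q0 x) +
             (P2 x ** M x ** 0 + (P2 x ** (- (M x ** (Pi1 x ** Q1 x ** P2 x) ** M x)) + (- (Q1 x ** P2 x ** A2) - Q0 x ** P2 x) ** M x) ** R) ** Pi1 x)) (at x)"
          by (rule bounded_bilinear.has_vector_derivative[OF bb_mm dX3 dPi1[OF xH xN]])
        have dW: "((\<lambda>t. mat 1 - P2 t ** M t ** R ** Pi1 t) has_vector_derivative
            (0 - (P2 x ** M x ** R ** (A1 ** Pi1 x ** Q1 x + Pi1 x ** Q0 x) +
             (P2 x ** M x ** 0 + (P2 x ** (- (M x ** (Pi1 x ** Q1 x ** P2 x) ** M x)) + (- (Q1 x ** P2 x ** A2) - Q0 x ** P2 x) ** M x) ** R) ** Pi1 x))) (at x)"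
          by (rule has_vector_derivative_diff[OF has_vector_derivative_const dX4])
        have dg: "(g has_vector_derivative
            ((mat 1 - P2 x ** M x ** R ** Pi1 x) *v (- (lam *s (Q1 x *v y x) + Q0 x *v y x)) +
             (0 - (P2 x ** M x ** R ** (A1 ** Pi1 x ** Q1 x + Pi1 x ** Q0 x) +
             (P2 x ** M x ** 0 + (P2 x ** (- (M x ** (Pi1 x ** Q1 x ** P2 x) ** M x)) + (- (Q1 x ** P2 x ** A2) - Q0 x ** P2 x) ** M x) ** R) ** Pi1 x)) *v y x)) (at x)"
          unfolding g_def[abs_def] by (rule bounded_bilinear.has_vector_derivative[OF bb_mv dW dy[OF xH xN]])
        have Sinv: "invertible (S x)" using Jinv xJ by blast
        have eq: "(mat 1 - P2 x ** M x ** R ** Pi1 x) *v (- (lam *s (Q1 x *v y x) + Q0 x *v y x)) +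
             (0 - (P2 x ** M x ** R ** (A1 ** Pi1 x ** Q1 x + Pi1 x ** Q0 x) +
             (P2 x ** M x ** 0 + (P2 x ** (- (M x ** (Pi1 x ** Q1 x ** P2 x) ** M x)) + (- (Q1 x ** P2 x ** A2) - Q0 x ** P2 x) ** M x) ** R) ** Pi1 x)) *v y x
          = - (lam *s (Q1 x *v g x) + (Q0 x - (Q1 x ** (P2 x ** M x ** Pi1 x) - P2 x ** M x ** Pi1 x ** Q1 x)) *v g x)"
          unfolding g_def
          by (rule key_alg[OF minv(2)[OF Sinv, folded M_def] minv(1)[OF Sinv, folded M_def] Rinv idt[OF xH]])
        from dg eq notd show False by simp
      qed
    qed
    then show "ac_solution J
       (\<lambda>x v. - (lam *s (Q1 x *v v)
                 + (Q0 x - (Q1 x ** (ctrans (Pi2 x) ** matrix_inv (S x) ** Pi1 x)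
                            - (ctrans (Pi2 x) ** matrix_inv (S x) ** Pi1 x) ** Q1 x)) *v v))
       (\<lambda>x. (mat 1 - ctrans (Pi2 x) ** matrix_inv (S x) ** matrix_inv (A1 - mat lam) ** Pi1 x) *v y x)"
      unfolding g_def M_def P2_def R_def .
  qed
qed


end
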